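(* Let $w=w_1w_2w_3\cdots$ be a Sturmian word over the alphabet $\{a,b\}$, and let $\beta_w=\lim_{n\to\infty}\frac{|\{1\le j\le n: w_j=b\}|}{n}$ (this limit exists for every Sturmian word). Then for every $\delta>0$, \[ M_w(x)=\frac{\beta_w\log 2}{2}\,x+O_\delta\!\left(x^{1/3+\delta}\right)\qquad (x\ge 1), \] where the implied constant depends only on $\delta$ (and $w$).
   Context: A Sturmian word is an infinite word $w=w_1w_2\cdots$ with letters $w_j\in\{a,b\}$ whose complexity function $p_w(n)$, the number of distinct subwords (factors) of length $n$ of $w$, satisfies $p_w(n)=n+1$ for all $n\ge1$. For $n\ge1$ define $o_w(n)=|\{j\in\mathbb{N}: j\mid n,\ w_j=b,\ n/j \text{ odd}\}|$ and $e_w(n)=|\{j\in\mathbb{N}: j\mid n,\ w_j=b,\ n/j\text{ even}\}|$, and $D_w(n)=o_w(n)-e_w(n)$. The mollified average is $M_w(x)=\sum_{n\le x}\left(1-\frac{n}{x}\right)D_w(n)$ (the paper prints the weight as $1-x/n$, but its Perron-formula representation $M_w(x)=\frac{1}{2\pi i}\int_{c-i\infty}^{c+i\infty}\frac{(1-2^{1-s})\zeta(s)F(s)x^s}{s(s+1)}ds$, $c>1$, with $F(s)=\sum_{n\ge1}\mathbf{1}[w_n=b]\,n^{-s}$, corresponds to the weight $1-n/x$). *)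

theory Defs
  imports "HOL-Analysis.Analysis"
begin

text \<open>An infinite word over {a,b} is a function w :: nat => bool on positions 1,2,3,...
  (w j = True means the letter b, w j = False means a; the value at 0 is irrelevant).\<close>

definition factors :: "(nat \<Rightarrow> bool) \<Rightarrow> nat \<Rightarrow> bool list set" where
  "factors w n = {map w [i..<i+n] | i. i \<ge> 1}"

definition complexity :: "(nat \<Rightarrow> bool) \<Rightarrow> nat \<Rightarrow> nat" where
  "complexity w n = card (factors w n)"

definition sturmian :: "(nat \<Rightarrow> bool) \<Rightarrow> bool" where
  "sturmian w \<longleftrightarrow> (\<forall>n\<ge>1. complexity w n = n + 1)"

definition o_w :: "(nat \<Rightarrow> bool) \<Rightarrow> nat \<Rightarrow> nat" where
  "o_w w n = card {j. j dvd n \<and> w j \<and> odd (n div j)}"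

definition e_w :: "(nat \<Rightarrow> bool) \<Rightarrow> nat \<Rightarrow> nat" where
  "e_w w n = card {j. j dvd n \<and> w j \<and> even (n div j)}"

definition D_w :: "(nat \<Rightarrow> bool) \<Rightarrow> nat \<Rightarrow> int" where
  "D_w w n = int (o_w w n) - int (e_w w n)"

definition M_w :: "(nat \<Rightarrow> bool) \<Rightarrow> real \<Rightarrow> real" where
  "M_w w x = (\<Sum>n\<in>{1..nat \<lfloor>x\<rfloor>}. (1 - real n / x) * real_of_int (D_w w n))"

definition b_freq :: "(nat \<Rightarrow> bool) \<Rightarrow> nat \<Rightarrow> real" where
  "b_freq w n = real (card {j. 1 \<le> j \<and> j \<le> n \<and> w j}) / real n"

definition beta_w :: "(nat \<Rightarrow> bool) \<Rightarrow> real" where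
  "beta_w w = lim (b_freq w)"

end

theory Submission
  imports Defs
begin

definition cnt :: "(nat \<Rightarrow> bool) \<Rightarrow> nat \<Rightarrow> nat \<Rightarrow> int" where
  "cnt x i n = (\<Sum>t\<in>{i..<i+n}. if x t then 1 else 0)"

lemma finite_factors: "finite (factors w n)"
proof -
  have "factors w n \<subseteq> {xs. set xs \<subseteq> UNIV \<and> length xs = n}"
    by (auto simp: factors_def)
  moreover have "finite {xs::bool list. set xs \<subseteq> UNIV \<and> length xs = n}"
    by (rule finite_lists_length_eq) simp
  ultimately show ?thesis by (rule finite_subset)
qed

lemma factors_0: "factors w 0 = {[]}"
  by (auto simp: factors_def)

lemma sturmian_card: "sturmian w \<Longrightarrow> card (factors w n) = n + 1"
  by (cases "n = 0") (auto simp: sturmian_def complexity_def factors_0)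

lemma map_upt_eq: "map x [s..<s+k] = map x [t..<t+k] \<longleftrightarrow> (\<forall>r<k. x (s+r) = x (t+r))"
  by (auto simp: list_eq_iff_nth_eq)

lemma in_factors: "i \<ge> 1 \<Longrightarrow> map w [i..<i+n] \<in> factors w n"
  by (auto simp: factors_def)

lemma card_two_rs:
  assumes "U \<noteq> W" "U@[True] \<in> factors w (Suc k)" "U@[False] \<in> factors w (Suc k)"
    "W@[True] \<in> factors w (Suc k)" "W@[False] \<in> factors w (Suc k)"
  shows "card (factors w k) + 2 \<le> card (factors w (Suc k))"
proof -
  let ?A = "factors w (Suc k) - {U@[False], W@[False]}"
  have sub: "factors w k \<subseteq> take k ` ?A"
  proof
    fix v assume "v \<in> factors w k"
    then obtain i where i: "i \<ge> 1" "v = map w [i..<i+k]" by (auto simp: factors_def)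
    let ?v = "map w [i..<i+Suc k]"
    have tv: "take k ?v = v" using i by (simp add: take_map)
    have vin: "?v \<in> factors w (Suc k)" using i(1) by (rule in_factors)
    have lU: "length U = k" using assms(2) by (auto simp: factors_def)
    have lW: "length W = k" using assms(4) by (auto simp: factors_def)
    show "v \<in> take k ` ?A"
    proof (cases "?v \<in> {U@[False], W@[False]}")
      case False
      then show ?thesis using vin tv by (metis Diff_iff image_eqI)
    next
      case True
      then have "v = U \<or> v = W" using tv lU lW by auto
      then show ?thesis
      proof
        assume "v = U"
        then show ?thesis using assms(2) lU by (intro image_eqI[of _ _ "U@[True]"]) auto
      next
        assume "v = W"
        then show ?thesis using assms(4) lW by (intro image_eqI[of _ _ "W@[True]"]) auto
      qed
    qed
  qed
  have "card (factors w k) \<le> card (take k ` ?A)"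
    by (rule card_mono[OF _ sub]) (simp add: finite_factors)
  also have "\<dots> \<le> card ?A" by (rule card_image_le) (simp add: finite_factors)
  also have "\<dots> = card (factors w (Suc k)) - 2"
    using assms by (simp add: card_Diff_subset finite_factors)
  finally show ?thesis
    using assms card_mono[OF finite_factors, of "{U@[False], W@[False]}" w "Suc k"]
    by auto
qed



lemma unique_ext:
  assumes c: "card (factors y (Suc k)) \<le> card (factors y k)"
    and st: "s \<ge> 1" "t \<ge> 1" and eq: "\<forall>r<k. y (s+r) = y (t+r)"
  shows "y (s+k) = y (t+k)"
proof -
  let ?A = "factors y (Suc k)"
  have img: "take k ` ?A = factors y k"
  proof
    show "take k ` ?A \<subseteq> factors y k"
      by (auto simp: factors_def take_map)
    show "factors y k \<subseteq> take k ` ?A"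
    proof
      fix v assume "v \<in> factors y k"
      then obtain i where i: "i \<ge> 1" "v = map y [i..<i+k]" by (auto simp: factors_def)
      have "take k (map y [i..<i+Suc k]) = v" using i by (simp add: take_map)
      moreover have "map y [i..<i+Suc k] \<in> ?A" using i(1) by (rule in_factors)
      ultimately show "v \<in> take k ` ?A" by blast
    qed
  qed
  have "card (take k ` ?A) = card ?A"
    using card_image_le[OF finite_factors, of "take k" y "Suc k"] c img by simp
  then have inj: "inj_on (take k) ?A"
    by (rule eq_card_imp_inj_on[OF finite_factors])
  have "take k (map y [s..<s+Suc k]) = take k (map y [t..<t+Suc k])"
    using eq by (simp add: take_map map_upt_eq)
  then have "map y [s..<s+Suc k] = map y [t..<t+Suc k]"
    using inj_onD[OF inj] in_factors st by blast
  then show ?thesis by (simp add: map_upt_eq)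
qed

lemma eventually_periodic:
  assumes c: "card (factors y (Suc k)) \<le> card (factors y k)"
  shows "\<exists>s P. P \<ge> 1 \<and> (\<forall>i\<ge>s. y (i+P) = y i)"
proof -
  define W where "W t = map y [t..<t+k]" for t
  let ?c = "card (factors y k)"
  have sub: "W ` {1..?c+1} \<subseteq> factors y k" by (auto simp: W_def intro!: in_factors)
  have "\<not> inj_on W {1..?c+1}"
  proof
    assume "inj_on W {1..?c+1}"
    then have "card (W ` {1..?c+1}) = ?c + 1" by (simp add: card_image)
    moreover have "card (W ` {1..?c+1}) \<le> ?c" by (rule card_mono[OF finite_factors sub])
    ultimately show False by simp
  qed
  then obtain s t where st: "s \<in> {1..?c+1}" "t \<in> {1..?c+1}" "s \<noteq> t" "W s = W t"
    by (auto simp: inj_on_def)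
  then obtain s t where st: "s \<ge> 1" "s < t" "W s = W t"
    by (metis atLeastAtMost_iff linorder_neqE_nat)
  have per: "\<forall>r<k. y (s+r) = y (t+r)" using st(3) by (simp add: W_def map_upt_eq)
  have H: "y i = y (i + (t-s))" if "i \<ge> s" for i
    using that
  proof (induction i rule: less_induct)
    case (less i)
    show ?case
    proof (cases "i < s + k")
      case True
      have "i - s < k" using True less.prems by simp
      with per have "y (s + (i-s)) = y (t + (i-s))" by blast
      moreover have "s + (i-s) = i" "t + (i-s) = i + (t-s)" using less.prems st(2) by auto
      ultimately show ?thesis by simp
    next
      case False
      define s' where "s' = i - k"
      have s': "s' \<ge> s" "s' + k = i" using False less.prems unfolding s'_def by linarith+
      have fa: "\<forall>r<k. y (s'+r) = y ((s' + (t-s))+r)"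
      proof (intro allI impI)
        fix r assume "r < k"
        then have l1: "s'+r < i" and l2: "s \<le> s'+r" using s' by linarith+
        from less.IH[OF l1 l2] have "y (s'+r) = y (s'+r + (t-s))" .
        then show "y (s'+r) = y ((s' + (t-s))+r)" by (simp add: algebra_simps)
      qed
      have a1: "s' \<ge> 1" "s' + (t-s) \<ge> 1" using s' st(1) by linarith+
      from unique_ext[OF c a1 fa] have e: "y (s'+k) = y (s' + (t-s) + k)" .
      have eq: "s' + (t-s) + k = i + (t-s)" using s' by linarith
      from e show ?thesis unfolding s'(2) eq .
    qed
  qed
  have "\<forall>i\<ge>s. y (i + (t-s)) = y i"
  proof (intro allI impI)
    fix i assume "i \<ge> s"
    from H[OF this] show "y (i + (t-s)) = y i" by (rule sym)
  qed
  moreover have "t - s \<ge> 1" using st(2) by linarith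
  ultimately show ?thesis by blast
qed

lemma not_eventually_periodic:
  assumes "sturmian x" "P \<ge> 1" "\<forall>i\<ge>s. x (i+P) = x i"
  shows False
proof -
  let ?m = "s + P"
  have red: "\<exists>i'\<in>{1..s+P}. map x [i..<i+?m] = map x [i'..<i'+?m]" if "i \<ge> 1" for i
    using that
  proof (induction i rule: less_induct)
    case (less i)
    show ?case
    proof (cases "i \<le> s + P")
      case True then show ?thesis using less.prems by (intro bexI[of _ i]) auto
    next
      case False
      have e1: "map x [i..<i+?m] = map x [(i-P)..<(i-P)+?m]"
        unfolding map_upt_eq
      proof (intro allI impI)
        fix r assume "r < ?m"
        have "(i-P)+r \<ge> s" using False by simp
        from assms(3)[rule_format, OF this] have "x ((i-P)+r+P) = x ((i-P)+r)" .
        moreover have "(i-P)+r+P = i+r" using False by simp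
        ultimately show "x (i+r) = x ((i-P)+r)" by metis
      qed
      have lt: "i - P < i" and ge: "1 \<le> i - P" using False assms(2) by auto
      from less.IH[OF lt ge] obtain i' where i': "i' \<in> {1..s+P}" and e2: "map x [(i-P)..<(i-P)+?m] = map x [i'..<i'+?m]"
        by blast
      from e1 e2 have "map x [i..<i+?m] = map x [i'..<i'+?m]" by (rule trans)
      with i' show ?thesis by blast
    qed
  qed
  have sub: "factors x ?m \<subseteq> (\<lambda>i. map x [i..<i+?m]) ` {1..s+P}"
  proof
    fix v assume "v \<in> factors x ?m"
    then obtain i where i: "i \<ge> 1" "v = map x [i..<i+?m]" by (auto simp: factors_def)
    from red[OF i(1)] obtain i' where "i' \<in> {1..s+P}" "map x [i..<i+?m] = map x [i'..<i'+?m]" by blast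
    then show "v \<in> (\<lambda>i. map x [i..<i+?m]) ` {1..s+P}" using i(2) by blast
  qed
  have "card (factors x ?m) \<le> card ((\<lambda>i. map x [i..<i+?m]) ` {1..s+P})"
    by (rule card_mono[OF _ sub]) simp
  also have "\<dots> \<le> card {1..s+P}" by (rule card_image_le) simp
  finally have "card (factors x ?m) \<le> s + P" by simp
  then show False using sturmian_card[OF assms(1), of ?m] by simp
qed

lemma recurrence:
  assumes stu: "sturmian x" and i: "i \<ge> 1"
  shows "\<exists>q\<ge>N. \<forall>r<m. x (q+r) = x (i+r)"
proof (rule ccontr)
  assume na: "\<not> ?thesis"
  define y where "y t = x (t + N)" for t
  have my: "map y [t..<t+n] = map x [t+N..<t+N+n]" for t n
    by (simp add: y_def list_eq_iff_nth_eq algebra_simps)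
  have "factors y m \<subseteq> factors x m - {map x [i..<i+m]}"
  proof
    fix v assume "v \<in> factors y m"
    then obtain t where t: "t \<ge> 1" "v = map y [t..<t+m]" by (auto simp: factors_def)
    have "v \<in> factors x m" using t by (auto simp: my factors_def intro!: exI[of _ "t+N"])
    moreover have "v \<noteq> map x [i..<i+m]"
      using na t by (auto simp: my map_upt_eq)
    ultimately show "v \<in> factors x m - {map x [i..<i+m]}" by simp
  qed
  then have "card (factors y m) \<le> card (factors x m - {map x [i..<i+m]})"
    by (intro card_mono) (auto intro: finite_factors)
  also have "\<dots> = m" using sturmian_card[OF stu, of m] in_factors[OF i, of x m]
    by (simp add: finite_factors)
  finally have cm: "card (factors y m) \<le> m" .
  have "\<exists>k<m. card (factors y (Suc k)) \<le> card (factors y k)"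
  proof (rule ccontr)
    assume "\<not> ?thesis"
    then have h: "\<forall>k<m. card (factors y k) < card (factors y (Suc k))" by auto
    have "k \<le> m \<Longrightarrow> k + 1 \<le> card (factors y k)" for k
    proof (induction k)
      case 0 then show ?case by (simp add: factors_0)
    next
      case (Suc k)
      have "card (factors y k) < card (factors y (Suc k))" using h Suc.prems by simp
      with Suc show ?case by simp
    qed
    then show False using cm by (metis Suc_eq_plus1 le_refl not_less_eq_eq)
  qed
  then obtain k where "card (factors y (Suc k)) \<le> card (factors y k)" by blast
  from eventually_periodic[OF this] obtain s P where sp: "P \<ge> 1" "\<forall>i\<ge>s. y (i+P) = y i" by blast
  have "\<forall>i\<ge>s+N. x (i+P) = x i"
  proof (intro allI impI)
    fix i assume "i \<ge> s + N"
    then have "i - N \<ge> s" by simp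
    from sp(2)[rule_format, OF this] have "x ((i - N) + P + N) = x ((i - N) + N)" by (simp only: y_def)
    moreover have "(i - N) + P + N = i + P" "(i - N) + N = i" using \<open>i \<ge> s+N\<close> by auto
    ultimately show "x (i+P) = x i" by metis
  qed
  then show False using not_eventually_periodic[OF stu sp(1)] by blast
qed



definition bal :: "(nat \<Rightarrow> bool) \<Rightarrow> bool" where
  "bal x \<longleftrightarrow> (\<forall>i j n. 1 \<le> i \<longrightarrow> 1 \<le> j \<longrightarrow> cnt x i n \<le> cnt x j n + 1)"

definition ind :: "bool \<Rightarrow> int" where "ind b = (if b then 1 else 0)"

lemma cnt_add: "cnt x i (a+b) = cnt x i a + cnt x (i+a) b"
  unfolding cnt_def by (subst sum.atLeastLessThan_concat[symmetric, of i "i+a"]) (auto simp: add.assoc)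

lemma cnt_0[simp]: "cnt x i 0 = 0" by (simp add: cnt_def)

lemma cnt_1: "cnt x i (Suc 0) = ind (x i)" by (simp add: cnt_def ind_def)

lemma cnt_Suc: "cnt x i (Suc n) = ind (x i) + cnt x (Suc i) n"
  using cnt_add[of x i 1 n] by (simp add: cnt_1)

lemma cnt_Suc2: "cnt x i (Suc n) = cnt x i n + ind (x (i+n))"
  using cnt_add[of x i n 1] by (simp add: cnt_1)

lemma cnt_cong: "(\<And>r. r < s \<Longrightarrow> x (a+r) = x (b+r)) \<Longrightarrow> cnt x a s = cnt x b s"
proof (induction s)
  case 0 then show ?case by simp
next
  case (Suc s) then show ?case by (simp add: cnt_Suc2)
qed

lemma ind_eq: "ind a = ind b \<longleftrightarrow> a = b" by (simp add: ind_def)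
lemma ind_ge: "0 \<le> ind a" and ind_le: "ind a \<le> 1" by (auto simp: ind_def)

lemma unbal_pair:
  assumes "\<not> bal x"
  shows "\<exists>i j m. 1 \<le> i \<and> 1 \<le> j \<and> x i \<and> \<not> x j \<and> x (i+m+1) \<and> \<not> x (j+m+1) \<and>
      (\<forall>r. 1 \<le> r \<and> r \<le> m \<longrightarrow> x (j+r) = x (i+r)) \<and>
      (\<forall>r. 1 \<le> r \<and> r \<le> m \<longrightarrow> x (i+r) = x (i+m+1-r))"
proof -
  define P where "P n \<longleftrightarrow> (\<exists>i j. 1 \<le> i \<and> 1 \<le> j \<and> cnt x j n + 2 \<le> cnt x i n)" for n
  have "\<exists>n. P n"
  proof -
    from assms obtain i j n where "1 \<le> i" "1 \<le> j" "\<not> cnt x i n \<le> cnt x j n + 1"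
      unfolding bal_def by blast
    then have "P n" unfolding P_def by (intro exI[of _ i] exI[of _ j]) auto
    then show ?thesis ..
  qed
  then obtain n where Pn: "P n" and minP: "\<And>n'. n' < n \<Longrightarrow> \<not> P n'"
    using exists_least_iff[of P] by blast
  have min: "cnt x i' n' \<le> cnt x j' n' + 1" if "n' < n" "1 \<le> i'" "1 \<le> j'" for n' i' j'
    using minP[OF that(1)] that(2,3) unfolding P_def by force
  obtain i j where ij: "1 \<le> i" "1 \<le> j" "cnt x j n + 2 \<le> cnt x i n" using Pn P_def by blast
  have "n \<noteq> 0" proof assume "n = 0" then show False using ij(3) by simp qed
  then obtain n1 where n1: "n = Suc n1" by (cases n) auto
  have first: "x i \<and> \<not> x j"
  proof (rule ccontr)
    assume "\<not> (x i \<and> \<not> x j)"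
    then have "ind (x i) \<le> ind (x j)" by (auto simp: ind_def)
    moreover have "cnt x (Suc i) n1 \<le> cnt x (Suc j) n1 + 1" using min[of n1 "Suc i" "Suc j"] n1 by simp
    ultimately show False using ij(3) unfolding n1 cnt_Suc by linarith
  qed
  have "n1 \<noteq> 0"
  proof
    assume "n1 = 0"
    then show False using ij(3) first n1 by (simp add: cnt_1 ind_def)
  qed
  then obtain m where m: "n = m + 2" using n1 by (cases n1) auto
  have last: "x (i+m+1) \<and> \<not> x (j+m+1)"
  proof (rule ccontr)
    assume "\<not> (x (i+m+1) \<and> \<not> x (j+m+1))"
    then have "ind (x (i+m+1)) \<le> ind (x (j+m+1))" by (auto simp: ind_def)
    moreover have "cnt x i (Suc m) \<le> cnt x j (Suc m) + 1" using min[of "Suc m" i j] m ij by simp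
    moreover have "cnt x i n = cnt x i (Suc m) + ind (x (i + Suc m))"
      "cnt x j n = cnt x j (Suc m) + ind (x (j + Suc m))" using m cnt_Suc2 by auto
    ultimately show False using ij(3) by simp
  qed
  have d: "cnt x i k = cnt x j k + 1" if "1 \<le> k" "k \<le> m+1" for k
  proof -
    have a: "cnt x i k \<le> cnt x j k + 1" using min[of k i j] that m ij by simp
    have "cnt x i n = cnt x i k + cnt x (i+k) (n-k)" "cnt x j n = cnt x j k + cnt x (j+k) (n-k)"
      using cnt_add[of x _ k "n-k"] that m by auto
    moreover have "cnt x (i+k) (n-k) \<le> cnt x (j+k) (n-k) + 1" using min[of "n-k" "i+k" "j+k"] that m by simp
    ultimately show ?thesis using a ij(3) by linarith
  qed
  have mid: "x (j+r) = x (i+r)" if "1 \<le> r" "r \<le> m" for r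
  proof -
    have "cnt x i (Suc r) = cnt x j (Suc r) + 1" "cnt x i r = cnt x j r + 1" using d that by auto
    then have "ind (x (i+r)) = ind (x (j+r))" unfolding cnt_Suc2 by linarith
    then show ?thesis by (simp add: ind_eq)
  qed
  have PQ: "cnt x (i+1) s = cnt x (i+m+1-s) s" if "s \<le> m" for s
  proof -
    have e1: "cnt x i (s+1) = 1 + cnt x (i+1) s" using cnt_Suc[of x i s] first by (simp add: ind_def)
    have e2: "cnt x j (s+1) = cnt x (i+1) s"
    proof -
      have "cnt x j (s+1) = cnt x (j+1) s" using cnt_Suc[of x j s] first by (simp add: ind_def)
      also have "\<dots> = cnt x (i+1) s"
      proof (rule cnt_cong)
        fix r assume "r < s"
        then have "x (j + (r+1)) = x (i + (r+1))" using mid[of "r+1"] that by simp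
        then show "x (j+1+r) = x (i+1+r)" by (simp add: algebra_simps)
      qed
      finally show ?thesis .
    qed
    have e3: "cnt x (i+m+1-s) (s+1) = cnt x (i+m+1-s) s + 1"
      using cnt_Suc2[of x "i+m+1-s" s] last that by (simp add: ind_def)
    have e4: "cnt x (j+m+1-s) (s+1) = cnt x (i+m+1-s) s"
    proof -
      have "cnt x (j+m+1-s) (s+1) = cnt x (j+m+1-s) s"
        using cnt_Suc2[of x "j+m+1-s" s] last that by (simp add: ind_def)
      also have "\<dots> = cnt x (i+m+1-s) s"
      proof (rule cnt_cong)
        fix r assume "r < s"
        then have "x (j + (m+1-s+r)) = x (i + (m+1-s+r))" using mid[of "m+1-s+r"] that by simp
        moreover have "j + (m+1-s+r) = j+m+1-s+r" "i + (m+1-s+r) = i+m+1-s+r" using that by auto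
        ultimately show "x (j+m+1-s+r) = x (i+m+1-s+r)" by metis
      qed
      finally show ?thesis .
    qed
    have b1: "cnt x i (s+1) \<le> cnt x (j+m+1-s) (s+1) + 1" using min[of "s+1" i "j+m+1-s"] that m ij by simp
    have b2: "cnt x (i+m+1-s) (s+1) \<le> cnt x j (s+1) + 1" using min[of "s+1" "i+m+1-s" j] that m ij by simp
    show ?thesis using b1 b2 e1 e2 e3 e4 by linarith
  qed
  have pal: "x (i+r) = x (i+m+1-r)" if "1 \<le> r" "r \<le> m" for r
  proof -
    have "cnt x (i+1) r = cnt x (i+1) (r-1) + ind (x (i+r))"
      using cnt_Suc2[of x "i+1" "r-1"] that by simp
    moreover have "cnt x (i+m+1-r) r = ind (x (i+m+1-r)) + cnt x (i+m+1-(r-1)) (r-1)"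
    proof -
      have "cnt x (i+m+1-r) (Suc (r-1)) = ind (x (i+m+1-r)) + cnt x (Suc (i+m+1-r)) (r-1)"
        by (rule cnt_Suc)
      moreover have "Suc (i+m+1-r) = i+m+1-(r-1)" "Suc (r-1) = r" using that by auto
      ultimately show ?thesis by simp
    qed
    moreover have "cnt x (i+1) r = cnt x (i+m+1-r) r" "cnt x (i+1) (r-1) = cnt x (i+m+1-(r-1)) (r-1)"
      using PQ that by auto
    ultimately have "ind (x (i+r)) = ind (x (i+m+1-r))" by linarith
    then show ?thesis by (simp add: ind_eq)
  qed
  show ?thesis
    using ij(1,2) first last mid pal by blast
qed



context
  fixes x :: "nat \<Rightarrow> bool" and i j m :: nat
  assumes stu: "sturmian x"
    and ij: "1 \<le> i" "1 \<le> j" "x i" "\<not> x j" "x (i+m+1)" "\<not> x (j+m+1)"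
    and mid: "\<And>r. 1 \<le> r \<Longrightarrow> r \<le> m \<Longrightarrow> x (j+r) = x (i+r)"
    and pal: "\<And>r. 1 \<le> r \<Longrightarrow> r \<le> m \<Longrightarrow> x (i+r) = x (i+m+1-r)"
begin

definition occ where "occ q \<longleftrightarrow> (\<forall>r. 1 \<le> r \<and> r \<le> m \<longrightarrow> x (q+r) = x (i+r))"
definition V where "V q = map x [q+1..<q+1+m]"

lemma V_eq: "V a = V b \<longleftrightarrow> (\<forall>r. 1 \<le> r \<and> r \<le> m \<longrightarrow> x (a+r) = x (b+r))"
proof -
  have "V a = V b \<longleftrightarrow> (\<forall>r<m. x (a+1+r) = x (b+1+r))" unfolding V_def by (rule map_upt_eq)
  also have "\<dots> \<longleftrightarrow> (\<forall>r. 1 \<le> r \<and> r \<le> m \<longrightarrow> x (a+r) = x (b+r))"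
  proof
    assume h: "\<forall>r<m. x (a+1+r) = x (b+1+r)"
    show "\<forall>r. 1 \<le> r \<and> r \<le> m \<longrightarrow> x (a+r) = x (b+r)"
    proof (intro allI impI)
      fix r assume "1 \<le> r \<and> r \<le> m"
      then have "r - 1 < m" "a+1+(r-1) = a+r" "b+1+(r-1) = b+r" by auto
      then show "x (a+r) = x (b+r)" using h by metis
    qed
  next
    assume h: "\<forall>r. 1 \<le> r \<and> r \<le> m \<longrightarrow> x (a+r) = x (b+r)"
    show "\<forall>r<m. x (a+1+r) = x (b+1+r)"
    proof (intro allI impI)
      fix r assume "r < m"
      then have "1 \<le> r+1 \<and> r+1 \<le> m" by simp
      from h[rule_format, OF this] have "x (a+(r+1)) = x (b+(r+1))" .
      then show "x (a+1+r) = x (b+1+r)" by (simp add: algebra_simps)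
    qed
  qed
  finally show ?thesis .
qed

lemma occ_V: "occ q \<longleftrightarrow> V q = V i" unfolding occ_def V_eq ..

lemma occ_i: "occ i" by (simp add: occ_def)
lemma occ_j: "occ j" using mid by (simp add: occ_def)

lemma V_factor: "V q \<in> factors x m" unfolding V_def by (rule in_factors) simp

lemma V_ext: "V q @ [x (q+m+1)] \<in> factors x (Suc m)"
proof -
  have "V q @ [x (q+m+1)] = map x [q+1..<q+1+Suc m]" by (simp add: V_def)
  then show ?thesis using in_factors[of "q+1" x "Suc m"] by simp
qed

lemma rs_unique:
  assumes "V q1 = V q2" "V q1 \<noteq> V i"
  shows "x (q1+m+1) = x (q2+m+1)"
proof (rule ccontr)
  assume ne: "x (q1+m+1) \<noteq> x (q2+m+1)"
  have "V q1 @ [True] \<in> factors x (Suc m)" "V q1 @ [False] \<in> factors x (Suc m)"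
    using V_ext[of q1] V_ext[of q2] assms(1) ne by (cases "x (q1+m+1)"; auto)+
  moreover have "V i @ [True] \<in> factors x (Suc m)" "V i @ [False] \<in> factors x (Suc m)"
    using V_ext[of i] V_ext[of j] occ_j ij(5,6) unfolding occ_V by auto
  ultimately have "card (factors x m) + 2 \<le> card (factors x (Suc m))"
    using card_two_rs[of "V q1" "V i"] assms(2) by blast
  then show False using sturmian_card[OF stu, of m] sturmian_card[OF stu, of "Suc m"] by simp
qed

lemma T_ext: "q \<ge> 1 \<Longrightarrow> occ q \<Longrightarrow> (x q # V i) @ [x (q+m+1)] \<in> factors x (Suc (Suc m))"
proof -
  assume q: "q \<ge> 1" "occ q"
  have "[q..<q+Suc (Suc m)] = [q..<q+1+m] @ [q+1+m]" by simp
  also have "[q..<q+1+m] = q # [q+1..<q+1+m]" by (simp add: upt_conv_Cons)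
  finally have mf: "map x [q..<q+Suc (Suc m)] = (x q # V q) @ [x (q+m+1)]"
    by (simp add: V_def add.commute add.left_commute)
  have vq: "V q = V i" using q(2) occ_V by simp
  have e: "map x [q..<q+Suc (Suc m)] = (x q # V i) @ [x (q+m+1)]" unfolding vq[symmetric] by (rule mf)
  from in_factors[OF q(1), of x "Suc (Suc m)"] show ?thesis unfolding e .
qed

lemma not_both:
  assumes "q1 \<ge> 1" "occ q1" "\<not> x q1" "x (q1+m+1)" "q2 \<ge> 1" "occ q2" "x q2" "\<not> x (q2+m+1)"
  shows False
proof -
  have "(False # V i) @ [True] \<in> factors x (Suc (Suc m))" "(False # V i) @ [False] \<in> factors x (Suc (Suc m))"
    "(True # V i) @ [True] \<in> factors x (Suc (Suc m))" "(True # V i) @ [False] \<in> factors x (Suc (Suc m))"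
    using T_ext[OF assms(1,2)] T_ext[OF ij(2) occ_j] T_ext[OF ij(1) occ_i] T_ext[OF assms(5,6)] assms ij
    by auto
  then have "card (factors x (Suc m)) + 2 \<le> card (factors x (Suc (Suc m)))"
    using card_two_rs[of "False # V i" "True # V i"] by auto
  then show False using sturmian_card[OF stu, of "Suc m"] sturmian_card[OF stu, of "Suc (Suc m)"] by simp
qed

lemma return_lemma:
  assumes p: "occ p" "occ p'" "p < p'" and none: "\<And>q. p < q \<Longrightarrow> q < p' \<Longrightarrow> \<not> occ q"
  shows "x p' = x (p+m+1)"
proof -
  consider "p' - p \<le> m" | "p' = p+m+1" | "p' > p+m+1" by linarith
  then show ?thesis
  proof cases
    case 1
    define l where "l = p' - p"
    have l: "1 \<le> l" "l \<le> m" "p' = p + l" using 1 p(3) by (auto simp: l_def)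
    have "1 \<le> l \<and> l \<le> m" using l by simp
    from p(1)[unfolded occ_def, rule_format, OF this] have "x (p+l) = x (i+l)" .
    then have "x p' = x (i+l)" using l(3) by simp
    moreover have "1 \<le> m+1-l \<and> m+1-l \<le> m" using l by arith
    from p(2)[unfolded occ_def, rule_format, OF this] have "x (p' + (m+1-l)) = x (i + (m+1-l))" .
    moreover have "p' + (m+1-l) = p+m+1" "i + (m+1-l) = i+m+1-l" using l by auto
    moreover have "x (i+l) = x (i+m+1-l)" using pal l by auto
    ultimately show ?thesis by metis
  next
    case 2 then show ?thesis by simp
  next
    case 3
    have sub: "V ` {p..p+m+1} \<subseteq> factors x m" using V_factor by auto
    have "\<not> inj_on V {p..p+m+1}"
    proof
      assume "inj_on V {p..p+m+1}"
      then have "card (V ` {p..p+m+1}) = m + 2" by (simp add: card_image)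
      moreover have "card (V ` {p..p+m+1}) \<le> m + 1"
        using card_mono[OF finite_factors sub] sturmian_card[OF stu, of m] by simp
      ultimately show False by simp
    qed
    then obtain a b where ab: "a \<in> {p..p+m+1}" "b \<in> {p..p+m+1}" "a \<noteq> b" "V a = V b"
      by (auto simp: inj_on_def)
    obtain q1 q2 where q: "p \<le> q1" "q1 < q2" "q2 \<le> p+m+1" "V q1 = V q2"
    proof (cases "a < b")
      case True then show ?thesis using that ab by auto
    next
      case False then show ?thesis using that[of b a] ab by auto
    qed
    have q2nocc: "\<not> occ q2" using none q 3 by auto
    then have q1ne: "V q1 \<noteq> V i" using q(4) occ_V by simp
    then have "q1 \<noteq> p" using p(1) occ_V by auto
    with q have q1p: "p < q1" by simp
    have step: "V (q1+d) = V (q2+d)" if "d \<le> p' - q2" for d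
      using that
    proof (induction d)
      case 0 then show ?case using q by simp
    next
      case (Suc d)
      have "p < q2 + d" "q2 + d < p'" using Suc.prems q q1p by auto
      then have "\<not> occ (q2+d)" using none by blast
      then have ne: "V (q1+d) \<noteq> V i" using Suc occ_V by simp
      have IH: "V (q1+d) = V (q2+d)" using Suc by simp
      have lastx: "x (q1+d+m+1) = x (q2+d+m+1)" using rs_unique[OF IH ne] .
      have IH': "\<And>r. 1 \<le> r \<Longrightarrow> r \<le> m \<Longrightarrow> x (q1+d+r) = x (q2+d+r)" using IH V_eq by blast
      show ?case unfolding V_eq
      proof (intro allI impI)
        fix r assume r: "1 \<le> r \<and> r \<le> m"
        show "x (q1 + Suc d + r) = x (q2 + Suc d + r)"
        proof (cases "r = m")
          case True then show ?thesis using lastx by simp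
        next
          case False
          then have "1 \<le> r+1" "r+1 \<le> m" using r by auto
          from IH'[OF this] have "x (q1+d+(r+1)) = x (q2+d+(r+1))" .
          then show ?thesis by simp
        qed
      qed
    qed
    from step[of "p' - q2"] have "V (q1 + (p' - q2)) = V p'" using q 3 by simp
    then have "occ (q1 + (p' - q2))" using p(2) occ_V by simp
    moreover have "p < q1 + (p' - q2)" "q1 + (p' - q2) < p'" using q q1p 3 by auto
    ultimately show ?thesis using none by blast
  qed
qed

lemma final_contra:
  assumes p0: "p0 \<ge> 1" "occ p0" "x p0 = d" "x (p0+m+1) = d"
    and H: "\<And>q. q \<ge> 1 \<Longrightarrow> occ q \<Longrightarrow> x q = d \<Longrightarrow> x (q+m+1) = d"
    and p1: "p1 \<ge> 1" "occ p1" "x p1 \<noteq> d"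
  shows False
proof -
  have claim: "x q = d" if "p0 < q" "occ q" for q
    using that
  proof (induction q rule: less_induct)
    case (less q)
    define S where "S = {q'. p0 \<le> q' \<and> q' < q \<and> occ q'}"
    have fin: "finite S" by (simp add: S_def)
    have ne: "p0 \<in> S" using less.prems p0 by (simp add: S_def)
    define q0 where "q0 = Max S"
    have q0S: "q0 \<in> S" unfolding q0_def using fin ne by (intro Max_in) auto
    have q0max: "\<And>q'. q' \<in> S \<Longrightarrow> q' \<le> q0" using fin by (simp add: q0_def)
    have none: "\<not> occ q'" if "q0 < q'" "q' < q" for q'
    proof
      assume "occ q'"
      then have "q' \<in> S" using that q0S by (simp add: S_def)
      then show False using q0max that by force
    qed
    have q0: "p0 \<le> q0" "q0 < q" "occ q0" using q0S by (auto simp: S_def)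
    have ret: "x q = x (q0+m+1)" by (rule return_lemma[OF q0(3) less.prems(2) q0(2) none])
    show ?case
    proof (cases "q0 = p0")
      case True then show ?thesis using ret p0 by simp
    next
      case False
      then have "p0 < q0" using q0 by simp
      then have "x q0 = d" using less.IH q0 by blast
      then have "x (q0+m+1) = d" using H q0 p0 by simp
      then show ?thesis using ret by simp
    qed
  qed
  obtain q where q: "q \<ge> Suc p0" "\<forall>r<m+2. x (q+r) = x (p1+r)"
    using recurrence[OF stu p1(1), of "Suc p0" "m+2"] by blast
  have "occ q"
    unfolding occ_def
  proof (intro allI impI)
    fix r assume r: "1 \<le> r \<and> r \<le> m"
    then have "x (q+r) = x (p1+r)" using q(2) by simp
    also have "\<dots> = x (i+r)" using p1(2) r unfolding occ_def by blast
    finally show "x (q+r) = x (i+r)" .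
  qed
  moreover have "x q = x p1" using q(2)[rule_format, of 0] by simp
  ultimately show False using claim[of q] q(1) p1(3) by simp
qed

lemma contradiction: False
proof (cases "\<forall>q. q \<ge> 1 \<longrightarrow> occ q \<longrightarrow> x q \<longrightarrow> x (q+m+1)")
  case True
  show False
    by (rule final_contra[of i True j]) (use True ij occ_i occ_j in auto)
next
  case False
  then obtain q2 where q2: "q2 \<ge> 1" "occ q2" "x q2" "\<not> x (q2+m+1)" by blast
  have "\<forall>q. q \<ge> 1 \<longrightarrow> occ q \<longrightarrow> \<not> x q \<longrightarrow> \<not> x (q+m+1)"
    using not_both q2 by blast
  then show False
    by (intro final_contra[of j False i]) (use ij occ_i occ_j in auto)
qed

end

theorem sturmian_bal: "sturmian x \<Longrightarrow> bal x"
proof (rule ccontr)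
  assume stu: "sturmian x" and "\<not> bal x"
  from unbal_pair[OF this(2)] obtain i j m where
    "1 \<le> i \<and> 1 \<le> j \<and> x i \<and> \<not> x j \<and> x (i+m+1) \<and> \<not> x (j+m+1) \<and>
      (\<forall>r. 1 \<le> r \<and> r \<le> m \<longrightarrow> x (j+r) = x (i+r)) \<and>
      (\<forall>r. 1 \<le> r \<and> r \<le> m \<longrightarrow> x (i+r) = x (i+m+1-r))" by blast
  then show False using contradiction[OF stu, of i j m] by blast
qed



lemma cnt_card: "cnt x 1 n = int (card {j. 1 \<le> j \<and> j \<le> n \<and> x j})"
proof -
  have "cnt x 1 n = (\<Sum>t\<in>{1..<1+n}. if x t then 1 else 0)" by (simp add: cnt_def)
  also have "\<dots> = (\<Sum>t\<in>{t\<in>{1..<1+n}. x t}. 1)" by (rule sum.inter_filter[symmetric]) simp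
  also have "\<dots> = int (card {t\<in>{1..<1+n}. x t})" by simp
  also have "{t\<in>{1..<1+n}. x t} = {j. 1 \<le> j \<and> j \<le> n \<and> x j}" by auto
  finally show ?thesis .
qed

lemma b_freq_cnt: "b_freq x n = real_of_int (cnt x 1 n) / real n"
  unfolding b_freq_def cnt_card by simp

lemma cnt_nonneg: "0 \<le> cnt x i n" unfolding cnt_def by (intro sum_nonneg) auto
lemma cnt_le: "cnt x i n \<le> int n"
proof -
  have "cnt x i n \<le> (\<Sum>t\<in>{i..<i+n}. 1)" unfolding cnt_def by (intro sum_mono) auto
  then show ?thesis by simp
qed

lemma abs_div_le: "\<bar>A\<bar> \<le> B \<Longrightarrow> (d::real) > 0 \<Longrightarrow> \<bar>A / d\<bar> \<le> B / d"
  by (simp add: abs_divide divide_right_mono)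

lemma bal_mult:
  assumes "bal x"
  shows "\<bar>cnt x 1 (k*n) - int k * cnt x 1 n\<bar> \<le> int k"
proof (induction k)
  case 0 then show ?case by simp
next
  case (Suc k)
  have "cnt x 1 (Suc k * n) = cnt x 1 (k*n) + cnt x (1 + k*n) n"
    using cnt_add[of x 1 "k*n" n] by (simp add: add.commute)
  moreover have "cnt x (1+k*n) n \<le> cnt x 1 n + 1" "cnt x 1 n \<le> cnt x (1+k*n) n + 1"
    using assms unfolding bal_def by auto
  ultimately show ?case using Suc.IH by (simp add: algebra_simps abs_le_iff)
qed

lemma freq:
  assumes "bal x"
  shows "\<exists>\<beta>. (b_freq x \<longlonglongrightarrow> \<beta>) \<and> 0 \<le> \<beta> \<and> \<beta> \<le> 1 \<and>
          (\<forall>n. \<bar>real_of_int (cnt x 1 n) - \<beta> * real n\<bar> \<le> 1)"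
proof -
  define f where "f n = real_of_int (cnt x 1 n) / real n" for n
  have close: "\<bar>f n - f m\<bar> \<le> 1 / real n + 1 / real m" if "n \<ge> 1" "m \<ge> 1" for n m
  proof -
    have "real_of_int \<bar>cnt x 1 (m*n) - int m * cnt x 1 n\<bar> \<le> real_of_int (int m)"
      using bal_mult[OF assms, of m n] by (simp only: of_int_le_iff)
    then have a: "\<bar>real_of_int (cnt x 1 (m*n)) - real m * real_of_int (cnt x 1 n)\<bar> \<le> real m"
      by simp
    have "real_of_int \<bar>cnt x 1 (n*m) - int n * cnt x 1 m\<bar> \<le> real_of_int (int n)"
      using bal_mult[OF assms, of n m] by (simp only: of_int_le_iff)
    then have b: "\<bar>real_of_int (cnt x 1 (m*n)) - real n * real_of_int (cnt x 1 m)\<bar> \<le> real n"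
      by (simp add: mult.commute)
    define c where "c = real_of_int (cnt x 1 (m*n))"
    have pos: "real n > 0" "real m > 0" using that by auto
    have "\<bar>c / (real m * real n) - f n\<bar> \<le> 1 / real n"
    proof -
      have "c / (real m * real n) - f n = (c - real m * real_of_int (cnt x 1 n)) / (real m * real n)"
        using pos by (simp add: f_def field_simps)
      also have "\<bar>\<dots>\<bar> \<le> real m / (real m * real n)"
        using abs_div_le[OF a[folded c_def], of "real m * real n"] pos by simp
      also have "\<dots> = 1 / real n" using pos by simp
      finally show ?thesis .
    qed
    moreover have "\<bar>c / (real m * real n) - f m\<bar> \<le> 1 / real m"
    proof -
      have "c / (real m * real n) - f m = (c - real n * real_of_int (cnt x 1 m)) / (real m * real n)"
        using pos by (simp add: f_def field_simps)
      also have "\<bar>\<dots>\<bar> \<le> real n / (real m * real n)"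
        using abs_div_le[OF b[folded c_def], of "real m * real n"] pos by simp
      also have "\<dots> = 1 / real m" using pos by simp
      finally show ?thesis .
    qed
    ultimately show ?thesis by linarith
  qed
  have "Cauchy f"
  proof (rule metric_CauchyI)
    fix e :: real assume e: "e > 0"
    obtain M :: nat where M: "M > 2 / e" using reals_Archimedean2 by blast
    have "2 / e > 0" using e by simp
    then have "real M > 0" using M by linarith
    then have M1: "M \<ge> 1" by simp
    show "\<exists>M. \<forall>m\<ge>M. \<forall>n\<ge>M. dist (f m) (f n) < e"
    proof (intro exI[of _ M] allI impI)
      fix m n assume mn: "m \<ge> M" "n \<ge> M"
      have "dist (f m) (f n) \<le> 1 / real m + 1 / real n"
        using close[of m n] mn M1 by (simp add: dist_real_def)
      also have "\<dots> \<le> 1 / real M + 1 / real M"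
        using mn M1 by (intro add_mono) (simp_all add: frac_le)
      also have "\<dots> < e" using M e M1 by (simp add: field_simps)
      finally show "dist (f m) (f n) < e" .
    qed
  qed
  then obtain \<beta> where lim: "f \<longlonglongrightarrow> \<beta>" using Cauchy_convergent_iff convergent_def by blast
  have bnd: "\<bar>f n - \<beta>\<bar> \<le> 1 / real n" if "n \<ge> 1" for n
  proof -
    have l1: "(\<lambda>m. \<bar>f n - f m\<bar>) \<longlonglongrightarrow> \<bar>f n - \<beta>\<bar>"
      by (intro tendsto_intros lim)
    have l2: "(\<lambda>m. 1 / real n + 1 / real m) \<longlonglongrightarrow> 1 / real n + 0"
      by (intro tendsto_intros LIMSEQ_inverse_real_of_nat[unfolded inverse_eq_divide] lim_inverse_n')
    have ev: "eventually (\<lambda>m. \<bar>f n - f m\<bar> \<le> 1 / real n + 1 / real m) sequentially"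
      using close[OF that] by (intro eventually_sequentiallyI[of 1]) simp
    from tendsto_le[OF trivial_limit_sequentially l2 l1 ev] show ?thesis by simp
  qed
  have f01: "0 \<le> f n \<and> f n \<le> 1" for n
  proof (cases "n = 0")
    case True then show ?thesis by (simp add: f_def)
  next
    case False
    then show ?thesis using cnt_nonneg[of x 1 n] cnt_le[of x 1 n]
      by (simp add: f_def divide_le_eq)
  qed
  have "0 \<le> \<beta>" by (rule tendsto_lowerbound[OF lim]) (use f01 in auto)
  moreover have "\<beta> \<le> 1" by (rule tendsto_upperbound[OF lim]) (use f01 in auto)
  moreover have "\<bar>real_of_int (cnt x 1 n) - \<beta> * real n\<bar> \<le> 1" for n
  proof (cases "n = 0")
    case True then show ?thesis by simp
  next
    case False
    then have pos: "real n > 0" by simp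
    have "real_of_int (cnt x 1 n) - \<beta> * real n = real n * (f n - \<beta>)"
      using pos by (simp add: f_def field_simps)
    also have "\<bar>\<dots>\<bar> \<le> real n * (1 / real n)"
    proof -
      have "\<bar>f n - \<beta>\<bar> \<le> 1 / real n" using bnd[of n] False by simp
      then have "real n * \<bar>f n - \<beta>\<bar> \<le> real n * (1 / real n)" using pos by (intro mult_left_mono) auto
      then show ?thesis using pos by (simp add: abs_mult)
    qed
    also have "\<dots> = 1" using pos by simp
    finally show ?thesis .
  qed
  moreover have "b_freq x = f" by (simp add: fun_eq_iff b_freq_cnt f_def)
  ultimately show ?thesis using lim by blast
qed



definition chi :: "nat \<Rightarrow> real" where "chi m = (if odd m then 1 else -1)"

lemma fin_div:
  fixes n :: nat assumes "n \<ge> 1" shows "finite {j. j dvd n \<and> (P j)}"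
proof -
  have "{j. j dvd n \<and> (P j)} \<subseteq> {..n}"
  proof
    fix j assume "j \<in> {j. j dvd n \<and> (P j)}"
    then have "j dvd n" by simp
    moreover have "0 < n" using assms by simp
    ultimately have "j \<le> n" by (rule dvd_imp_le)
    then show "j \<in> {..n}" by simp
  qed
  then show ?thesis by (rule finite_subset) simp
qed

lemma D_sum:
  assumes "n \<ge> 1"
  shows "real_of_int (D_w w n) = (\<Sum>j\<in>{j. j dvd n \<and> w j}. chi (n div j))"
proof -
  let ?A = "{j. j dvd n \<and> w j}"
  have fin: "finite ?A" using assms by (rule fin_div)
  have "(\<Sum>j\<in>?A. chi (n div j)) =
        (\<Sum>j\<in>?A. if odd (n div j) then 1 else 0) - (\<Sum>j\<in>?A. if odd (n div j) then 0 else 1)"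
    unfolding sum_subtractf[symmetric] by (rule sum.cong) (auto simp: chi_def)
  also have "(\<Sum>j\<in>?A. if odd (n div j) then 1 else (0::real)) = real (card {j\<in>?A. odd (n div j)})"
    by (subst sum.inter_filter[symmetric, OF fin]) simp
  also have "(\<Sum>j\<in>?A. if odd (n div j) then 0 else (1::real)) = real (card {j\<in>?A. \<not> odd (n div j)})"
  proof -
    have "(\<Sum>j\<in>?A. if odd (n div j) then 0 else (1::real)) = (\<Sum>j\<in>?A. if \<not> odd (n div j) then 1 else 0)"
      by (rule sum.cong) auto
    also have "\<dots> = real (card {j\<in>?A. \<not> odd (n div j)})"
      by (subst sum.inter_filter[symmetric, OF fin]) simp
    finally show ?thesis .
  qed
  also have "{j\<in>?A. odd (n div j)} = {j. j dvd n \<and> w j \<and> odd (n div j)}" by auto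
  also have "{j\<in>?A. \<not> odd (n div j)} = {j. j dvd n \<and> w j \<and> even (n div j)}" by auto
  finally show ?thesis by (simp add: D_w_def o_w_def e_w_def)
qed

lemma M_swap:
  fixes x :: real
  defines "N \<equiv> nat \<lfloor>x\<rfloor>"
  shows "M_w w x = (\<Sum>m\<in>{1..N}. chi m * (\<Sum>j\<in>{1..N div m}. if w j then 1 - real (j*m) / x else 0))"
proof -
  define g where "g = (\<lambda>(n::nat, d::nat). (1 - real n / x) * chi (n div d))"
  define h where "h = (\<lambda>(m::nat, d::nat). chi m * (1 - real (d*m) / x))"
  define S1 where "S1 = Sigma {1..N} (\<lambda>n. {j. j dvd n \<and> w j})"
  define S2 where "S2 = Sigma {1..N} (\<lambda>m. {j\<in>{1..N div m}. w j})"
  have "M_w w x = (\<Sum>n\<in>{1..N}. (1 - real n / x) * (\<Sum>j\<in>{j. j dvd n \<and> w j}. chi (n div j)))"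
    unfolding M_w_def N_def[symmetric] by (intro sum.cong refl) (simp add: D_sum)
  also have "\<dots> = (\<Sum>n\<in>{1..N}. \<Sum>j\<in>{j. j dvd n \<and> w j}. g (n, j))"
    by (simp add: g_def sum_distrib_left)
  also have "\<dots> = (\<Sum>(n,j)\<in>S1. g (n, j))"
    unfolding S1_def by (rule sum.Sigma) (auto intro: fin_div)
  also have "\<dots> = sum g S1" by (simp add: case_prod_unfold)
  also have "\<dots> = sum h S2"
  proof (rule sum.reindex_bij_witness[where i = "\<lambda>(m, d). (d*m, d)" and j = "\<lambda>(n, d). (n div d, d)"])
    fix a assume "a \<in> S1"
    then obtain n d where a: "a = (n, d)" "1 \<le> n" "n \<le> N" "d dvd n" "w d" by (auto simp: S1_def)
    have d0: "d > 0" using a by (metis dvd_0_left_iff gr0I not_one_le_zero)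
    have dn: "d * (n div d) = n" using a(4) by simp
    have dle: "d \<le> n" using a by (simp add: dvd_imp_le)
    show "(case (case a of (n, d) \<Rightarrow> (n div d, d)) of (m, d) \<Rightarrow> (d * m, d)) = a" using a dn by simp
    have "0 < n div d" using dle d0 by (simp add: div_greater_zero_iff)
    then have "n div d \<ge> 1" by simp
    moreover have "n div d \<le> N" using a(3) by (meson div_le_dividend le_trans)
    moreover have "d \<le> N div (n div d)"
      using dn a(3) \<open>n div d \<ge> 1\<close> by (metis div_le_mono nonzero_mult_div_cancel_right not_one_le_zero)
    ultimately show "(case a of (n, d) \<Rightarrow> (n div d, d)) \<in> S2" using a d0 by (auto simp: S2_def)
    have "real d * real (n div d) = real n" using dn by (metis of_nat_mult)
    then show "h (case a of (n, d) \<Rightarrow> (n div d, d)) = g a" using a by (simp add: h_def g_def mult.commute)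
  next
    fix b assume "b \<in> S2"
    then obtain m d where b: "b = (m, d)" "1 \<le> m" "m \<le> N" "1 \<le> d" "d \<le> N div m" "w d"
      by (auto simp: S2_def)
    show "(case (case b of (m, d) \<Rightarrow> (d * m, d)) of (n, d) \<Rightarrow> (n div d, d)) = b" using b by simp
    have "d * m \<le> N" using b(5) div_times_less_eq_dividend[of N m] mult_le_mono1[of d "N div m" m] by linarith
    moreover have "1 \<le> d * m" using b by simp
    ultimately show "(case b of (m, d) \<Rightarrow> (d * m, d)) \<in> S1" using b by (auto simp: S1_def)
  qed
  also have "\<dots> = (\<Sum>(m,j)\<in>S2. h (m, j))" by (simp add: case_prod_unfold)
  also have "\<dots> = (\<Sum>m\<in>{1..N}. \<Sum>j\<in>{j\<in>{1..N div m}. w j}. h (m, j))"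
    unfolding S2_def by (rule sum.Sigma[symmetric]) auto
  also have "\<dots> = (\<Sum>m\<in>{1..N}. chi m * (\<Sum>j\<in>{1..N div m}. if w j then 1 - real (j*m) / x else 0))"
  proof (rule sum.cong[OF refl])
    fix m assume "m \<in> {1..N}"
    have "(\<Sum>j\<in>{j\<in>{1..N div m}. w j}. h (m, j)) = (\<Sum>j\<in>{1..N div m}. if w j then h (m, j) else 0)"
      by (rule sum.inter_filter) simp
    also have "\<dots> = chi m * (\<Sum>j\<in>{1..N div m}. if w j then 1 - real (j*m) / x else 0)"
      unfolding sum_distrib_left by (rule sum.cong) (auto simp: h_def)
    finally show "(\<Sum>j\<in>{j\<in>{1..N div m}. w j}. h (m, j)) = chi m * (\<Sum>j\<in>{1..N div m}. if w j then 1 - real (j*m) / x else 0)" .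
  qed
  finally show ?thesis .
qed



definition Phi :: "(nat \<Rightarrow> real) \<Rightarrow> nat \<Rightarrow> real \<Rightarrow> real" where
  "Phi a K Y = (\<Sum>i<K. a i) + (Y - real K) * a K"

lemma inner_Phi:
  "(\<Sum>j\<in>{1..K}. if w j then Y - real j else 0) = Phi (\<lambda>i. real_of_int (cnt w 1 i)) K Y"
proof (induction K)
  case 0 then show ?case by (simp add: Phi_def)
next
  case (Suc K)
  have c: "real_of_int (cnt w 1 (Suc K)) = real_of_int (cnt w 1 K) + real_of_int (ind (w (Suc K)))"
    using cnt_Suc2[of w 1 K] by simp
  have "(\<Sum>j\<in>{1..Suc K}. if w j then Y - real j else 0) =
        (\<Sum>j\<in>{1..K}. if w j then Y - real j else 0) + (if w (Suc K) then Y - real (Suc K) else 0)"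
    by simp
  also have "\<dots> = Phi (\<lambda>i. real_of_int (cnt w 1 i)) K Y + (if w (Suc K) then Y - real (Suc K) else 0)"
    using Suc by simp
  also have "\<dots> = Phi (\<lambda>i. real_of_int (cnt w 1 i)) (Suc K) Y"
    unfolding Phi_def using c by (simp add: ind_def algebra_simps)
  finally show ?case .
qed

lemma Phi_lip:
  assumes A: "\<And>i. \<bar>a i\<bar> \<le> A" and k1: "real K1 \<le> Y1" "Y1 < real K1 + 1"
    and k2: "real K2 \<le> Y2" "Y2 < real K2 + 1" and le: "Y1 \<le> Y2"
  shows "\<bar>Phi a K2 Y2 - Phi a K1 Y1\<bar> \<le> A * (Y2 - Y1)"
proof -
  have A0: "0 \<le> A" using A[of 0] by linarith
  have "K1 \<le> K2"
  proof (rule ccontr)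
    assume "\<not> K1 \<le> K2"
    then have "real K2 + 1 \<le> real K1" by simp
    then show False using k1 k2 le by linarith
  qed
  then consider "K1 = K2" | "K1 < K2" by linarith
  then show ?thesis
  proof cases
    case 1
    then have "Phi a K2 Y2 - Phi a K1 Y1 = (Y2 - Y1) * a K1" by (simp add: Phi_def algebra_simps)
    also have "\<bar>\<dots>\<bar> \<le> (Y2 - Y1) * A" using le A[of K1] by (simp add: abs_mult mult_left_mono)
    finally show ?thesis by (simp add: mult.commute)
  next
    case 2
    define T where "T = (\<Sum>i\<in>{Suc K1..<K2}. a i)"
    have split: "(\<Sum>i<K2. a i) = (\<Sum>i<K1. a i) + a K1 + T"
    proof -
      have "(\<Sum>i\<in>{0..<Suc K1}. a i) + T = (\<Sum>i\<in>{0..<K2}. a i)"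
        unfolding T_def using 2 by (intro sum.atLeastLessThan_concat) auto
      then have "(\<Sum>i<K2. a i) = (\<Sum>i\<in>{0..<Suc K1}. a i) + T"
        by (simp add: lessThan_atLeast0)
      also have "(\<Sum>i\<in>{0..<Suc K1}. a i) = (\<Sum>i<K1. a i) + a K1"
        by (simp add: lessThan_atLeast0)
      finally show ?thesis .
    qed
    have tT: "\<bar>T\<bar> \<le> (real K2 - real K1 - 1) * A"
    proof -
      have "\<bar>T\<bar> \<le> (\<Sum>i\<in>{Suc K1..<K2}. \<bar>a i\<bar>)" unfolding T_def by (rule sum_abs)
      also have "\<dots> \<le> real (card {Suc K1..<K2}) * A" by (rule sum_bounded_above) (use A in auto)
      also have "real (card {Suc K1..<K2}) = real K2 - real K1 - 1" using 2 by simp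
      finally show ?thesis .
    qed
    have t1: "\<bar>(1 - (Y1 - real K1)) * a K1\<bar> \<le> (1 - (Y1 - real K1)) * A"
      using k1 A[of K1] by (simp add: abs_mult mult_left_mono)
    have t3: "\<bar>(Y2 - real K2) * a K2\<bar> \<le> (Y2 - real K2) * A"
      using k2 A[of K2] by (simp add: abs_mult mult_left_mono)
    have eq: "Phi a K2 Y2 - Phi a K1 Y1 = (1 - (Y1 - real K1)) * a K1 + T + (Y2 - real K2) * a K2"
      unfolding Phi_def split by (simp add: algebra_simps)
    have sumeq: "(1 - (Y1 - real K1)) * A + (real K2 - real K1 - 1) * A + (Y2 - real K2) * A = A * (Y2 - Y1)"
      by (simp add: algebra_simps)
    have tri: "\<bar>(1 - (Y1 - real K1)) * a K1 + T + (Y2 - real K2) * a K2\<bar> \<le>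
        \<bar>(1 - (Y1 - real K1)) * a K1\<bar> + \<bar>T\<bar> + \<bar>(Y2 - real K2) * a K2\<bar>"
      by (rule order.trans[OF abs_triangle_ineq add_right_mono[OF abs_triangle_ineq]])
    show ?thesis unfolding eq using tri t1 tT t3 sumeq by linarith
  qed
qed

lemma Phi_bound:
  assumes A: "\<And>i. \<bar>a i\<bar> \<le> A" and k: "real K \<le> Y" "Y < real K + 1"
  shows "\<bar>Phi a K Y\<bar> \<le> A * Y"
proof -
  have "\<bar>Phi a K Y - Phi a 0 0\<bar> \<le> A * (Y - 0)"
    by (rule Phi_lip[OF A]) (use k in auto)
  moreover have "Phi a 0 0 = 0" by (simp add: Phi_def)
  ultimately show ?thesis by simp
qed

lemma sum_real_lessThan: "(\<Sum>i<K. real i) = real K * (real K - 1) / 2"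
  by (induction K) (simp_all add: algebra_simps)

definition fr :: "nat \<Rightarrow> real \<Rightarrow> real" where "fr K Y = (Y - real K) * (1 - (Y - real K))"

lemma Phi_id: "Phi real K Y - (Y^2 - Y) / 2 = fr K Y / 2"
  unfolding Phi_def fr_def sum_real_lessThan by (simp add: field_simps power2_eq_square)

lemma fr_bounds:
  assumes "real K \<le> Y" "Y < real K + 1"
  shows "0 \<le> fr K Y" "fr K Y \<le> 1/4" "fr K Y \<le> Y - real K" "fr K Y \<le> 1 - (Y - real K)"
proof -
  define t where "t = Y - real K"
  have t: "0 \<le> t" "t < 1" using assms by (auto simp: t_def)
  have f: "fr K Y = t * (1 - t)" by (simp add: fr_def t_def)
  show "0 \<le> fr K Y" unfolding f using t by simp
  have "0 \<le> (t - 1/2)^2" by simp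
  then show "fr K Y \<le> 1/4" unfolding f by (simp add: power2_eq_square algebra_simps)
  show "fr K Y \<le> Y - real K" unfolding f t_def[symmetric] using t by (simp add: mult_left_le)
  show "fr K Y \<le> 1 - (Y - real K)" unfolding f t_def[symmetric] using t by (simp add: mult_left_le_one_le)
qed

lemma fr_lip:
  assumes k1: "real K1 \<le> Y1" "Y1 < real K1 + 1"
    and k2: "real K2 \<le> Y2" "Y2 < real K2 + 1" and le: "Y1 \<le> Y2"
  shows "\<bar>fr K2 Y2 - fr K1 Y1\<bar> \<le> Y2 - Y1"
proof -
  have "K1 \<le> K2"
  proof (rule ccontr)
    assume "\<not> K1 \<le> K2"
    then have "real K2 + 1 \<le> real K1" by simp
    then show False using k1 k2 le by linarith
  qed
  then consider "K1 = K2" | "K1 < K2" by linarith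
  then show ?thesis
  proof cases
    case 1
    define t1 where "t1 = Y1 - real K1"
    define t2 where "t2 = Y2 - real K1"
    have t: "0 \<le> t1" "t1 < 1" "0 \<le> t2" "t2 < 1" "t1 \<le> t2" using k1 k2 le 1 by (auto simp: t1_def t2_def)
    have "fr K2 Y2 - fr K1 Y1 = (t2 - t1) * (1 - t1 - t2)"
      using 1 by (simp add: fr_def t1_def t2_def algebra_simps)
    also have "\<bar>\<dots>\<bar> = (t2 - t1) * \<bar>1 - t1 - t2\<bar>" using t by (simp add: abs_mult)
    also have "\<dots> \<le> (t2 - t1) * 1" using t by (intro mult_left_mono) auto
    finally show ?thesis by (simp add: t1_def t2_def)
  next
    case 2
    then have "real K1 + 1 \<le> real K2" by simp
    have a: "0 \<le> fr K1 Y1" "fr K1 Y1 \<le> Y2 - Y1"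
      using fr_bounds[OF k1] k2 \<open>real K1 + 1 \<le> real K2\<close> by linarith+
    have b: "0 \<le> fr K2 Y2" "fr K2 Y2 \<le> Y2 - Y1"
      using fr_bounds[OF k2] k1 \<open>real K1 + 1 \<le> real K2\<close> by linarith+
    show ?thesis using a b by linarith
  qed
qed

definition R :: "(nat \<Rightarrow> bool) \<Rightarrow> real \<Rightarrow> nat \<Rightarrow> real \<Rightarrow> real" where
  "R w \<beta> K Y = Phi (\<lambda>i. real_of_int (cnt w 1 i)) K Y - \<beta> * (Y^2 - Y) / 2"

lemma R_decomp:
  "R w \<beta> K Y = Phi (\<lambda>i. real_of_int (cnt w 1 i) - \<beta> * real i) K Y + \<beta> * fr K Y / 2"
proof -
  have "Phi (\<lambda>i. real_of_int (cnt w 1 i)) K Y =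
        Phi (\<lambda>i. real_of_int (cnt w 1 i) - \<beta> * real i) K Y + \<beta> * Phi real K Y"
    unfolding Phi_def by (simp add: sum_subtractf sum_distrib_left algebra_simps)
  moreover have e: "Phi real K Y = fr K Y / 2 + (Y^2 - Y) / 2" using Phi_id[of K Y] by linarith
  ultimately show ?thesis unfolding R_def by (simp add: algebra_simps)
qed

context
  fixes w :: "nat \<Rightarrow> bool" and \<beta> :: real
  assumes b01: "0 \<le> \<beta>" "\<beta> \<le> 1"
    and fb: "\<And>n. \<bar>real_of_int (cnt w 1 n) - \<beta> * real n\<bar> \<le> 1"
begin

lemma R_lip:
  assumes k1: "real K1 \<le> Y1" "Y1 < real K1 + 1"
    and k2: "real K2 \<le> Y2" "Y2 < real K2 + 1" and le: "Y1 \<le> Y2"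
  shows "\<bar>R w \<beta> K2 Y2 - R w \<beta> K1 Y1\<bar> \<le> 2 * (Y2 - Y1)"
proof -
  have p: "\<bar>Phi (\<lambda>i. real_of_int (cnt w 1 i) - \<beta> * real i) K2 Y2 - Phi (\<lambda>i. real_of_int (cnt w 1 i) - \<beta> * real i) K1 Y1\<bar> \<le> 1 * (Y2 - Y1)"
    by (rule Phi_lip[OF fb k1 k2 le])
  have f: "\<bar>fr K2 Y2 - fr K1 Y1\<bar> \<le> Y2 - Y1" by (rule fr_lip[OF k1 k2 le])
  have eq: "\<beta> * fr K2 Y2 / 2 - \<beta> * fr K1 Y1 / 2 = \<beta> / 2 * (fr K2 Y2 - fr K1 Y1)"
    by (simp add: algebra_simps)
  have b2: "0 \<le> \<beta> / 2" using b01 by simp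
  have "\<bar>\<beta> * fr K2 Y2 / 2 - \<beta> * fr K1 Y1 / 2\<bar> = \<beta> / 2 * \<bar>fr K2 Y2 - fr K1 Y1\<bar>"
    unfolding eq by (simp only: abs_mult abs_of_nonneg[OF b2])
  also have "\<dots> \<le> 1 * (Y2 - Y1)" using f b01 le by (intro mult_mono) auto
  finally have "\<bar>\<beta> * fr K2 Y2 / 2 - \<beta> * fr K1 Y1 / 2\<bar> \<le> 1 * (Y2 - Y1)" .
  then show ?thesis using p unfolding R_decomp by linarith
qed

lemma R_bound:
  assumes k: "real K \<le> Y" "Y < real K + 1"
  shows "\<bar>R w \<beta> K Y\<bar> \<le> Y + 1/8"
proof -
  have p: "\<bar>Phi (\<lambda>i. real_of_int (cnt w 1 i) - \<beta> * real i) K Y\<bar> \<le> 1 * Y"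
    by (rule Phi_bound[OF fb k])
  have "\<beta> * fr K Y \<le> 1 * (1/4)" using fr_bounds[OF k] b01 by (intro mult_mono) auto
  moreover have "0 \<le> \<beta> * fr K Y" using fr_bounds[OF k] b01 by simp
  ultimately have "0 \<le> \<beta> * fr K Y / 2" "\<beta> * fr K Y / 2 \<le> 1 * (1/4) / 2" by auto
  then show ?thesis using p unfolding R_decomp by linarith
qed

end



lemma chi_sum: "(\<Sum>m\<in>{1..N}. chi m) = (if odd N then 1 else 0)"
  by (induction N) (auto simp: chi_def)

lemma chi_alt: "(\<Sum>m\<in>{1..N}. chi m / real m) = (\<Sum>i<N. (-1)^i * (1 / real (Suc i)))"
proof (induction N)
  case 0 then show ?case by simp
next
  case (Suc N)
  have "chi (Suc N) = (-1)^N" by (simp add: chi_def)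
  then show ?case using Suc by simp
qed

lemma alt_bound: "\<bar>(\<Sum>m\<in>{1..N}. chi m / real m) - ln 2\<bar> \<le> 1 / (real N + 1)"
proof -
  define a where "a i = 1 / real (Suc i)" for i
  define P where "P n = (\<Sum>i<n. (-1)^i * a i)" for n
  have a0: "a \<longlonglongrightarrow> 0" unfolding a_def
    using LIMSEQ_inverse_real_of_nat by (simp add: inverse_eq_divide)
  have apos: "\<And>n. 0 \<le> a n" by (simp add: a_def)
  have amono: "\<And>n. a (Suc n) \<le> a n" by (simp add: a_def frac_le)
  note L = summable_Leibniz'[OF a0 apos amono]
  have "(\<lambda>i. (-1)^i * a i) = (\<lambda>k. (-1)^k / real (Suc k))" by (simp add: a_def fun_eq_iff)
  then have l: "(\<Sum>i. (-1)^i * a i) = ln 2"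
    using alternating_harmonic_series_sums sums_unique by metis
  have lo: "P (2*n) \<le> ln 2" for n using L(2)[of n] l by (simp add: P_def)
  have hi: "ln 2 \<le> P (2*n+1)" for n using L(4)[of n] l by (simp add: P_def)
  have S: "(\<Sum>m\<in>{1..N}. chi m / real m) = P N" unfolding chi_alt P_def a_def ..
  show ?thesis
  proof (cases "even N")
    case True
    then obtain n where n: "N = 2*n" by (auto elim: evenE)
    have "P (2*n+1) = P (2*n) + a (2*n)" by (simp add: P_def)
    moreover have "a (2*n) = 1 / (real N + 1)" using n by (simp add: a_def)
    ultimately show ?thesis using lo[of n] hi[of n] S unfolding n abs_le_iff by linarith
  next
    case False
    then obtain n where n: "N = 2*n+1" by (metis oddE)
    have "P (2*(n+1)) = P (2*n+1) - a (2*n+1)" by (simp add: P_def)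
    moreover have "a (2*n+1) = 1 / (real N + 1)" using n by (simp add: a_def)
    ultimately show ?thesis using lo[of "n+1"] hi[of n] S unfolding n abs_le_iff by linarith
  qed
qed

lemma pair_sum: "(\<Sum>m\<in>{1..2*n}. chi m * g m) = (\<Sum>k\<in>{1..n}. g (2*k-1) - g (2*k))"
proof (induction n)
  case 0 then show ?case by simp
next
  case (Suc n)
  have "{1..2 * Suc n} = insert (Suc (Suc (2*n))) (insert (Suc (2*n)) {1..2*n})" by auto
  then have "(\<Sum>m\<in>{1..2*Suc n}. chi m * g m) = (\<Sum>m\<in>{1..2*n}. chi m * g m) + g (Suc (2*n)) - g (Suc (Suc (2*n)))"
    by (simp add: chi_def)
  then show ?case using Suc by simp
qed

lemma pair_bound:
  "\<bar>\<Sum>m\<in>{1..N}. chi m * g m\<bar> \<le> (\<Sum>k\<in>{1..N div 2}. \<bar>g (2*k-1) - g (2*k)\<bar>) + \<bar>g N\<bar>"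
proof -
  have s: "\<bar>\<Sum>m\<in>{1..2*n}. chi m * g m\<bar> \<le> (\<Sum>k\<in>{1..n}. \<bar>g (2*k-1) - g (2*k)\<bar>)" for n
    unfolding pair_sum by (rule sum_abs)
  show ?thesis
  proof (cases "even N")
    case True
    then obtain n where n: "N = 2*n" by (auto elim: evenE)
    then show ?thesis using s[of n] by simp
  next
    case False
    then obtain n where n: "N = 2*n+1" by (metis oddE)
    have "(\<Sum>m\<in>{1..N}. chi m * g m) = (\<Sum>m\<in>{1..2*n}. chi m * g m) + g N"
      using n by (simp add: chi_def)
    moreover have "N div 2 = n" using n by simp
    moreover have "\<bar>(\<Sum>m\<in>{1..2*n}. chi m * g m) + g N\<bar> \<le> \<bar>\<Sum>m\<in>{1..2*n}. chi m * g m\<bar> + \<bar>g N\<bar>"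
      by (rule abs_triangle_ineq)
    ultimately show ?thesis using s[of n] by simp
  qed
qed

lemma abs_div_le2: "\<bar>A\<bar> \<le> B \<Longrightarrow> (d::real) > 0 \<Longrightarrow> \<bar>A / d\<bar> \<le> B / d"
  by (simp add: abs_divide divide_right_mono)

lemma ratio_eq:
  assumes "(x::real) > 0" "c > 0" "d = c + 1"
  shows "(x / c - x / d) / (x / c) = 1 / d"
proof -
  have d: "d > 0" using assms by simp
  have "(x / c - x / d) / (x / c) = 1 - c / d" using assms(1,2) d by (simp add: field_simps)
  also have "\<dots> = 1 / d" using assms d by (simp add: field_simps)
  finally show ?thesis .
qed

lemma ratio_bound:
  fixes R1 R2 Y1 Y2 :: real
  assumes "1 \<le> Y1" "Y1 \<le> Y2" "\<bar>R2 - R1\<bar> \<le> 2 * (Y2 - Y1)" "\<bar>R1\<bar> \<le> 2 * Y1"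
  shows "\<bar>R2 / Y2 - R1 / Y1\<bar> \<le> 4 * ((Y2 - Y1) / Y2)"
proof -
  have p: "Y1 > 0" "Y2 > 0" using assms by auto
  have e: "R2 / Y2 - R1 / Y1 = ((R2 - R1) * Y1 - R1 * (Y2 - Y1)) / (Y1 * Y2)"
    using p by (simp add: field_simps)
  have "\<bar>(R2 - R1) * Y1\<bar> \<le> 2 * (Y2 - Y1) * Y1" using assms p by (simp add: abs_mult mult_right_mono)
  moreover have "\<bar>R1 * (Y2 - Y1)\<bar> \<le> 2 * Y1 * (Y2 - Y1)" using assms p by (simp add: abs_mult mult_right_mono)
  moreover have "\<bar>(R2 - R1) * Y1 - R1 * (Y2 - Y1)\<bar> \<le> \<bar>(R2 - R1) * Y1\<bar> + \<bar>R1 * (Y2 - Y1)\<bar>"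
    by (rule abs_triangle_ineq4)
  moreover have "2 * (Y2 - Y1) * Y1 + 2 * Y1 * (Y2 - Y1) = 4 * (Y2 - Y1) * Y1" by (simp add: algebra_simps)
  ultimately have "\<bar>(R2 - R1) * Y1 - R1 * (Y2 - Y1)\<bar> \<le> 4 * (Y2 - Y1) * Y1"
    by linarith
  then have "\<bar>((R2 - R1) * Y1 - R1 * (Y2 - Y1)) / (Y1 * Y2)\<bar> \<le> 4 * (Y2 - Y1) * Y1 / (Y1 * Y2)"
    by (rule abs_div_le2) (use p in simp)
  also have "\<dots> = 4 * ((Y2 - Y1) / Y2)" using p by (simp add: field_simps)
  finally show ?thesis unfolding e .
qed

lemma floor_div:
  fixes x :: real
  assumes "x \<ge> 1" "m \<ge> 1"
  shows "real (nat \<lfloor>x\<rfloor> div m) \<le> x / real m" "x / real m < real (nat \<lfloor>x\<rfloor> div m) + 1"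
proof -
  define N where "N = nat \<lfloor>x\<rfloor>"
  have N: "real N \<le> x" "x < real N + 1" using assms(1) unfolding N_def by linarith+
  have mp: "real m > 0" using assms by simp
  have "N div m * m \<le> N" by simp
  then have "real (N div m * m) \<le> real N" by (simp only: of_nat_le_iff)
  then have "real (N div m) * real m \<le> x" using N by simp
  then show "real (nat \<lfloor>x\<rfloor> div m) \<le> x / real m" using mp by (simp add: N_def[symmetric] field_simps)
  have e1: "N div m * m + N mod m = N" by (rule div_mult_mod_eq)
  have e2: "N mod m < m" using assms(2) by simp
  have e3: "(N div m + 1) * m = N div m * m + m" by (simp add: algebra_simps)
  have "N < (N div m + 1) * m" using e1 e2 e3 by linarith
  then have "N + 1 \<le> (N div m + 1) * m" by simp
  then have "real (N + 1) \<le> real ((N div m + 1) * m)" by (simp only: of_nat_le_iff)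
  then have "real N + 1 \<le> (real (N div m) + 1) * real m" by (simp add: algebra_simps)
  then have "x < (real (N div m) + 1) * real m" using N by linarith
  then show "x / real m < real (nat \<lfloor>x\<rfloor> div m) + 1" using mp by (simp add: N_def[symmetric] field_simps)
qed

lemma tri3: fixes a b c l e1 e2 e3 :: real
  assumes "\<bar>a - l\<bar> \<le> e1" "\<bar>b\<bar> \<le> e2" "\<bar>c\<bar> \<le> e3" shows "\<bar>a - b + c - l\<bar> \<le> e1 + e2 + e3"
  using assms unfolding abs_le_iff by (elim conjE, intro conjI; linarith)

context
  fixes w :: "nat \<Rightarrow> bool" and \<beta> :: real
  assumes b01: "0 \<le> \<beta>" "\<beta> \<le> 1"
    and fb: "\<And>n. \<bar>real_of_int (cnt w 1 n) - \<beta> * real n\<bar> \<le> 1"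
begin

lemma main_bound:
  fixes x :: real
  assumes x1: "x \<ge> 1"
  shows "\<bar>M_w w x - \<beta> * ln 2 / 2 * x\<bar> \<le> 5 + 2 * ln x"
proof -
  define N where "N = nat \<lfloor>x\<rfloor>"
  have N: "real N \<le> x" "x < real N + 1" "N \<ge> 1" using x1 unfolding N_def by linarith+
  define Y where "Y m = x / real m" for m
  define K where "K m = N div m" for m
  define g where "g m = R w \<beta> (K m) (Y m) / Y m" for m
  have KY: "real (K m) \<le> Y m" "Y m < real (K m) + 1" if "m \<ge> 1" for m
    using floor_div[OF x1 that] by (simp_all add: K_def Y_def N_def)
  have Ypos: "Y m > 0" if "m \<ge> 1" for m using x1 that by (simp add: Y_def)
  have inner: "(\<Sum>j\<in>{1..N div m}. if w j then 1 - real (j*m) / x else 0) = \<beta> * (Y m - 1) / 2 + g m"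
    if m: "m \<in> {1..N}" for m
  proof -
    have mp: "real m > 0" "m \<ge> 1" using m by auto
    have "(\<Sum>j\<in>{1..N div m}. if w j then 1 - real (j*m) / x else 0)
        = (\<Sum>j\<in>{1..K m}. (if w j then Y m - real j else 0) / Y m)"
      unfolding K_def
    proof (rule sum.cong[OF refl])
      fix j
      have "1 - real (j*m) / x = (Y m - real j) / Y m" using mp x1 by (simp add: Y_def field_simps)
      then show "(if w j then 1 - real (j*m) / x else 0) = (if w j then Y m - real j else 0) / Y m" by simp
    qed
    also have "\<dots> = Phi (\<lambda>i. real_of_int (cnt w 1 i)) (K m) (Y m) / Y m"
      unfolding sum_divide_distrib[symmetric] inner_Phi ..
    also have "\<dots> = (R w \<beta> (K m) (Y m) + \<beta> * ((Y m)^2 - Y m) / 2) / Y m" by (simp add: R_def)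
    also have "\<dots> = \<beta> * (Y m - 1) / 2 + g m" using Ypos[OF mp(2)] by (simp add: g_def field_simps power2_eq_square)
    finally show ?thesis .
  qed
  have M: "M_w w x = \<beta> * x / 2 * (\<Sum>m\<in>{1..N}. chi m / real m) - \<beta> / 2 * (\<Sum>m\<in>{1..N}. chi m)
          + (\<Sum>m\<in>{1..N}. chi m * g m)"
  proof -
    have "M_w w x = (\<Sum>m\<in>{1..N}. chi m * (\<beta> * (Y m - 1) / 2 + g m))"
      unfolding M_swap N_def[symmetric]
    proof (intro sum.cong refl)
      fix m assume "m \<in> {1..N}"
      then show "chi m * (\<Sum>j\<in>{1..N div m}. if w j then 1 - real (j*m) / x else 0) = chi m * (\<beta> * (Y m - 1) / 2 + g m)"
        using inner[OF \<open>m \<in> {1..N}\<close>] by simp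
    qed
    also have "\<dots> = (\<Sum>m\<in>{1..N}. \<beta> * x / 2 * (chi m / real m) - \<beta> / 2 * chi m + chi m * g m)"
      by (intro sum.cong refl) (simp add: Y_def field_simps)
    finally show ?thesis by (simp add: sum.distrib sum_subtractf sum_distrib_left)
  qed
  have t1: "\<bar>\<beta> * x / 2 * (\<Sum>m\<in>{1..N}. chi m / real m) - \<beta> * ln 2 / 2 * x\<bar> \<le> 1/2"
  proof -
    have "\<beta> * x / 2 * (\<Sum>m\<in>{1..N}. chi m / real m) - \<beta> * ln 2 / 2 * x =
          \<beta> * x / 2 * ((\<Sum>m\<in>{1..N}. chi m / real m) - ln 2)" by (simp add: algebra_simps)
    also have "\<bar>\<dots>\<bar> \<le> \<beta> * x / 2 * (1 / (real N + 1))"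
      unfolding abs_mult using alt_bound[of N] b01 x1 by (intro mult_mono) auto
    also have "\<dots> \<le> 1 * 1 / 2"
    proof -
      have "x / (real N + 1) \<le> 1" using N by simp
      moreover have "0 \<le> x / (real N + 1)" using x1 by simp
      ultimately have "\<beta> * (x / (real N + 1)) \<le> 1 * 1" using b01 by (intro mult_mono) auto
      then show ?thesis by simp
    qed
    finally show ?thesis by simp
  qed
  have t2: "\<bar>\<beta> / 2 * (\<Sum>m\<in>{1..N}. chi m)\<bar> \<le> 1/2"
    unfolding chi_sum using b01 by auto
  have gpair: "\<bar>g (2*k-1) - g (2*k)\<bar> \<le> 2 * (1 / real k)" if k: "k \<in> {1..N div 2}" for k
  proof -
    have k1: "k \<ge> 1" "2*k \<le> N" using k by auto
    have m1: "2*k - 1 \<ge> 1" "2*k \<ge> 1" using k1 by auto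
    have rk: "real (2*k-1) = 2 * real k - 1" using k1 by (simp add: of_nat_diff)
    have Yle: "Y (2*k) \<le> Y (2*k-1)" unfolding Y_def using x1 k1 m1 by (intro divide_left_mono) auto
    have Y1: "1 \<le> Y (2*k)"
    proof -
      have "real (2*k) \<le> x" using k1 N by (metis of_nat_le_iff order_trans)
      then show ?thesis using k1 by (simp add: Y_def)
    qed
    have lip: "\<bar>R w \<beta> (K (2*k-1)) (Y (2*k-1)) - R w \<beta> (K (2*k)) (Y (2*k))\<bar> \<le> 2 * (Y (2*k-1) - Y (2*k))"
      by (rule R_lip[OF b01 fb KY[OF m1(2)] KY[OF m1(1)] Yle])
    have bd: "\<bar>R w \<beta> (K (2*k)) (Y (2*k))\<bar> \<le> 2 * Y (2*k)"
      using R_bound[OF b01 fb KY[OF m1(2)]] Y1 by linarith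
    have "\<bar>g (2*k-1) - g (2*k)\<bar> \<le> 4 * ((Y (2*k-1) - Y (2*k)) / Y (2*k-1))"
      unfolding g_def by (rule ratio_bound[OF Y1 Yle lip bd])
    also have "(Y (2*k-1) - Y (2*k)) / Y (2*k-1) = 1 / real (2 * k)"
    proof -
      have "real k \<ge> 1" using k1 by simp
      then show ?thesis unfolding Y_def by (intro ratio_eq) (use x1 rk \<open>real k \<ge> 1\<close> in auto)
    qed
    finally show ?thesis by simp
  qed
  have gN: "\<bar>g N\<bar> \<le> 2"
  proof -
    have YN: "1 \<le> Y N" using N by (simp add: Y_def)
    have "\<bar>R w \<beta> (K N) (Y N)\<bar> \<le> 2 * Y N" using R_bound[OF b01 fb KY[OF N(3)]] YN by linarith
    then show ?thesis using YN by (simp add: g_def abs_divide divide_le_eq)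
  qed
  have harmb: "(\<Sum>k\<in>{1..N div 2}. \<bar>g (2*k-1) - g (2*k)\<bar>) \<le> 2 * (ln x + 1)"
  proof -
    have "(\<Sum>k\<in>{1..N div 2}. \<bar>g (2*k-1) - g (2*k)\<bar>) \<le> (\<Sum>k\<in>{1..N div 2}. 2 * (1 / real k))"
      by (rule sum_mono) (rule gpair)
    also have "\<dots> = 2 * harm (N div 2)" by (simp add: harm_def sum_distrib_left inverse_eq_divide)
    also have "\<dots> \<le> 2 * (ln x + 1)"
    proof (cases "N div 2 = 0")
      case True then show ?thesis using x1 by (simp add: harm_def)
    next
      case False
      then have "harm (N div 2) - ln (real (N div 2)) \<le> harm 1 - ln (real (1::nat))"
        by (intro euler_mascheroni_sequence_decreasing) auto
      then have "harm (N div 2) \<le> ln (real (N div 2)) + 1" by (simp add: harm_def)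
      moreover have "ln (real (N div 2)) \<le> ln x"
      proof -
        have "real (N div 2) \<le> real N" by simp
        then have "real (N div 2) \<le> x" using N by linarith
        then show ?thesis using False by simp
      qed
      ultimately show ?thesis by simp
    qed
    finally show ?thesis .
  qed
  have t3: "\<bar>\<Sum>m\<in>{1..N}. chi m * g m\<bar> \<le> 2 * (ln x + 1) + 2"
    using pair_bound[of g N] harmb gN by linarith
  have "\<bar>M_w w x - \<beta> * ln 2 / 2 * x\<bar> \<le> 1/2 + 1/2 + (2 * (ln x + 1) + 2)"
    unfolding M by (rule tri3[OF t1 t2 t3])
  then show ?thesis by simp
qed

end



theorem theorem4p1:
  fixes w :: "nat \<Rightarrow> bool"
  assumes "sturmian w"
  shows "b_freq w \<longlonglongrightarrow> beta_w w \<and>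
    (\<forall>\<delta>::real. \<delta> > 0 \<longrightarrow> (\<exists>C::real. \<forall>x::real. x \<ge> 1 \<longrightarrow>
       \<bar>M_w w x - beta_w w * ln 2 / 2 * x\<bar> \<le> C * x powr (1/3 + \<delta>)))"
proof -
  have bal: "bal w" by (rule sturmian_bal[OF assms])
  obtain \<beta> where \<beta>: "b_freq w \<longlonglongrightarrow> \<beta>" "0 \<le> \<beta>" "\<beta> \<le> 1"
      "\<forall>n. \<bar>real_of_int (cnt w 1 n) - \<beta> * real n\<bar> \<le> 1"
    using freq[OF bal] by blast
  have bw: "beta_w w = \<beta>" unfolding beta_w_def using \<beta>(1) by (rule limI)
  show ?thesis
  proof
    show "b_freq w \<longlonglongrightarrow> beta_w w" using \<beta>(1) bw by simp
    show "\<forall>\<delta>::real. \<delta> > 0 \<longrightarrow> (\<exists>C::real. \<forall>x::real. x \<ge> 1 \<longrightarrow>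
       \<bar>M_w w x - beta_w w * ln 2 / 2 * x\<bar> \<le> C * x powr (1/3 + \<delta>))"
    proof (intro allI impI)
      fix \<delta> :: real assume \<delta>: "\<delta> > 0"
      show "\<exists>C::real. \<forall>x::real. x \<ge> 1 \<longrightarrow>
         \<bar>M_w w x - beta_w w * ln 2 / 2 * x\<bar> \<le> C * x powr (1/3 + \<delta>)"
      proof (intro exI[of _ 11] allI impI)
        fix x :: real assume x: "x \<ge> 1"
        have mb: "\<bar>M_w w x - \<beta> * ln 2 / 2 * x\<bar> \<le> 5 + 2 * ln x"
          by (rule main_bound) (use \<beta> x in auto)
        have xp: "x > 0" using x by simp
        have "ln (x powr (1/3)) = (1/3) * ln x" using xp by (simp add: ln_powr)
        moreover have "ln (x powr (1/3)) \<le> x powr (1/3) - 1" by (rule ln_le_minus_one) (use xp in simp)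
        ultimately have l: "ln x \<le> 3 * x powr (1/3)" by linarith
        have p1: "1 \<le> x powr (1/3)" using x by (simp add: ge_one_powr_ge_zero)
        have p2: "x powr (1/3) \<le> x powr (1/3 + \<delta>)" by (rule powr_mono) (use x \<delta> in auto)
        show "\<bar>M_w w x - beta_w w * ln 2 / 2 * x\<bar> \<le> 11 * x powr (1/3 + \<delta>)"
          using mb l p1 p2 unfolding bw by linarith
      qed
    qed
  qed
qed

end
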